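(* Let $p$ be an odd prime and let $L$ be a $\mathbb{Z}_p$-lattice of rank $k\ge4$ with $L\simeq\langle\epsilon_1,p^{e_2}\epsilon_2,p^{e_3}\epsilon_3,\dots,p^{e_k}\epsilon_k\rangle$, where $0\le e_2\le\cdots\le e_k$ and $\epsilon_i\in\mathbb{Z}_p^\times$. If $\nu_p(\langle\epsilon_1,p^{e_2}\epsilon_2,p^{e_3}\epsilon_3\rangle)=\infty$ (i.e., this ternary lattice is anisotropic), then $B(\mathbf x,\mathbf y)\in p^{\nu_p(L)-1}\mathbb{Z}_p$ for all $\mathbf x,\mathbf y\in L$ with $\mathrm{ord}_p(Q(\mathbf x))=\mathrm{ord}_p(Q(\mathbf y))=\nu_p(L)$.
   Context: $\langle a_1,\dots,a_k\rangle$ denotes the $\mathbb{Z}_p$-lattice with diagonal Gram matrix; $B$ is the bilinear form and $Q(\mathbf x)=B(\mathbf x,\mathbf x)$. For odd $p$, $SC_p=\{1,\Delta_p,p,p\Delta_p\}$ with $\Delta_p$ a non-square unit. For $L$ of rank $\ge4$ and $s\in SC_p$, let $u\ge0$ be least with $sp^{2u}=Q(\mathbf x)$ for some $\mathbf x\in L$; $\nu_{p,s}(L)=\mathrm{ord}_p(sp^{2u})$ and $\nu_p(L)=\max_{s\in SC_p}\nu_{p,s}(L)$. For an anisotropic ternary lattice $K$, $\nu_p(K)=\infty$. *)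

theory Defs
  imports "HOL-Number_Theory.Number_Theory" "HOL-Library.Extended_Nat"
begin

text \<open>p-adic integers as compatible sequences of residues: f n is the residue mod p^n.\<close>
definition Zp :: "int \<Rightarrow> (nat \<Rightarrow> int) set" where
  "Zp p = {f. \<forall>n. 0 \<le> f n \<and> f n < p ^ n \<and> f (Suc n) mod p ^ n = f n}"

definition zp_zero :: "nat \<Rightarrow> int" where
  "zp_zero = (\<lambda>_. 0)"

definition zp_of_int :: "int \<Rightarrow> int \<Rightarrow> (nat \<Rightarrow> int)" where
  "zp_of_int p c = (\<lambda>n. c mod p ^ n)"

definition zp_mult :: "int \<Rightarrow> (nat \<Rightarrow> int) \<Rightarrow> (nat \<Rightarrow> int) \<Rightarrow> (nat \<Rightarrow> int)" where
  "zp_mult p f g = (\<lambda>n. (f n * g n) mod p ^ n)"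

definition zp_unit :: "int \<Rightarrow> (nat \<Rightarrow> int) \<Rightarrow> bool" where
  "zp_unit p f \<longleftrightarrow> f \<in> Zp p \<and> f 1 \<noteq> 0"

definition zp_ord :: "int \<Rightarrow> (nat \<Rightarrow> int) \<Rightarrow> enat" where
  "zp_ord p f = (if f = zp_zero then \<infinity> else enat (LEAST n. f (Suc n) \<noteq> 0))"

definition in_pow_ideal :: "int \<Rightarrow> nat \<Rightarrow> (nat \<Rightarrow> int) \<Rightarrow> bool" where
  "in_pow_ideal p m z \<longleftrightarrow> (\<exists>w\<in>Zp p. z = zp_mult p (zp_of_int p (p ^ m)) w)"

definition vec_Zp :: "int \<Rightarrow> nat \<Rightarrow> (nat \<Rightarrow> nat \<Rightarrow> int) \<Rightarrow> bool" where
  "vec_Zp p k x \<longleftrightarrow> (\<forall>i<k. x i \<in> Zp p)"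

definition diag_B :: "int \<Rightarrow> (nat \<Rightarrow> nat \<Rightarrow> int) \<Rightarrow> nat \<Rightarrow>
    (nat \<Rightarrow> nat \<Rightarrow> int) \<Rightarrow> (nat \<Rightarrow> nat \<Rightarrow> int) \<Rightarrow> (nat \<Rightarrow> int)" where
  "diag_B p a k x y = (\<lambda>n. (\<Sum>i<k. a i n * x i n * y i n) mod p ^ n)"

definition diag_Q :: "int \<Rightarrow> (nat \<Rightarrow> nat \<Rightarrow> int) \<Rightarrow> nat \<Rightarrow> (nat \<Rightarrow> nat \<Rightarrow> int) \<Rightarrow> (nat \<Rightarrow> int)" where
  "diag_Q p a k x = diag_B p a k x x"

definition anisotropic :: "int \<Rightarrow> (nat \<Rightarrow> nat \<Rightarrow> int) \<Rightarrow> nat \<Rightarrow> bool" where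
  "anisotropic p a k \<longleftrightarrow> (\<forall>x. vec_Zp p k x \<and> diag_Q p a k x = zp_zero \<longrightarrow> (\<forall>i<k. x i = zp_zero))"

definition nonsq :: "int \<Rightarrow> int" where
  "nonsq p = (SOME d. 0 < d \<and> d < p \<and> \<not> QuadRes p d)"

definition SC :: "int \<Rightarrow> (nat \<Rightarrow> int) set" where
  "SC p = {zp_of_int p 1, zp_of_int p (nonsq p), zp_of_int p p, zp_of_int p (p * nonsq p)}"

definition nu_s :: "int \<Rightarrow> (nat \<Rightarrow> nat \<Rightarrow> int) \<Rightarrow> nat \<Rightarrow> (nat \<Rightarrow> int) \<Rightarrow> enat" where
  "nu_s p a k s =
    (let R = (\<lambda>u. \<exists>x. vec_Zp p k x \<and> diag_Q p a k x = zp_mult p s (zp_of_int p (p ^ (2 * u))))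
     in if (\<exists>u. R u) then zp_ord p (zp_mult p s (zp_of_int p (p ^ (2 * (LEAST u. R u))))) else \<infinity>)"

definition nu :: "int \<Rightarrow> (nat \<Rightarrow> nat \<Rightarrow> int) \<Rightarrow> nat \<Rightarrow> enat" where
  "nu p a k = Sup (nu_s p a k ` SC p)"

definition lat_coeff :: "int \<Rightarrow> (nat \<Rightarrow> nat) \<Rightarrow> (nat \<Rightarrow> nat \<Rightarrow> int) \<Rightarrow> nat \<Rightarrow> nat \<Rightarrow> int" where
  "lat_coeff p e eps i = zp_mult p (zp_of_int p (p ^ e i)) (eps i)"

end

theory Submission
  imports Defs
begin

definition coh :: "int \<Rightarrow> (nat \<Rightarrow> int) \<Rightarrow> bool" where
  "coh p F \<longleftrightarrow> (\<forall>n. [F (Suc n) = F n] (mod p ^ n))"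

lemma coh_le: assumes "coh p F" "n \<le> N" shows "[F N = F n] (mod p ^ n)"
  using assms(2)
proof (induction N rule: dec_induct)
  case base then show ?case by simp
next
  case (step N)
  have "[F (Suc N) = F N] (mod p ^ N)" using assms(1) coh_def by blast
  then have "[F (Suc N) = F N] (mod p ^ n)"
    by (rule cong_dvd_modulus[OF _ le_imp_power_dvd[OF step.hyps(1)]])
  then show ?case using step.IH cong_trans by blast
qed

lemma Zp_coh: "f \<in> Zp p \<Longrightarrow> coh p f"
  unfolding coh_def Zp_def cong_def by auto

lemma Zp_mod: assumes "f \<in> Zp p" shows "f n mod p ^ n = f n"
  using assms unfolding Zp_def by auto

lemma Zp_le: assumes "f \<in> Zp p" "n \<le> N" shows "f N mod p ^ n = f n"
  using coh_le[OF Zp_coh[OF assms(1)] assms(2)] Zp_mod[OF assms(1)] unfolding cong_def by simp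

lemma coh_red: assumes "coh p F" "p > 1" shows "(\<lambda>n. F n mod p ^ n) \<in> Zp p"
proof -
  have "F (Suc n) mod p ^ Suc n mod p ^ n = F n mod p ^ n" for n
  proof -
    have "F (Suc n) mod p ^ Suc n mod p ^ n = F (Suc n) mod p ^ n"
      by (rule mod_mod_cancel) (simp add: le_imp_power_dvd)
    also have "\<dots> = F n mod p ^ n" using assms(1) unfolding coh_def cong_def by blast
    finally show ?thesis .
  qed
  then show ?thesis unfolding Zp_def using assms(2) by auto
qed

lemma coh_const: "coh p (\<lambda>n. c)" unfolding coh_def by simp
lemma coh_mult: "coh p F \<Longrightarrow> coh p G \<Longrightarrow> coh p (\<lambda>n. F n * G n)"
  unfolding coh_def by (simp add: cong_mult)
lemma coh_add: "coh p F \<Longrightarrow> coh p G \<Longrightarrow> coh p (\<lambda>n. F n + G n)"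
  unfolding coh_def by (simp add: cong_add)
lemma coh_diff: "coh p F \<Longrightarrow> coh p G \<Longrightarrow> coh p (\<lambda>n. F n - G n)"
  unfolding coh_def by (simp add: cong_diff)
lemma coh_sum: "(\<And>i. i \<in> I \<Longrightarrow> coh p (F i)) \<Longrightarrow> coh p (\<lambda>n. \<Sum>i\<in>I. F i n)"
  unfolding coh_def by (simp add: cong_sum)
lemma coh_modn: assumes "coh p F" shows "coh p (\<lambda>n. F n mod p ^ n)"
  unfolding coh_def cong_def
proof
  fix n
  have "F (Suc n) mod p ^ Suc n mod p ^ n = F (Suc n) mod p ^ n"
    by (rule mod_mod_cancel) (simp add: le_imp_power_dvd)
  then show "F (Suc n) mod p ^ Suc n mod p ^ n = F n mod p ^ n mod p ^ n"
    using assms unfolding coh_def cong_def by simp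
qed

lemma ord_ge_iff: assumes "f \<in> Zp p" shows "(enat d \<le> zp_ord p f) = (f d = 0)"
proof (cases "f = zp_zero")
  case True then show ?thesis by (simp add: zp_ord_def zp_zero_def)
next
  case False
  then obtain n where n: "f n \<noteq> 0" unfolding zp_zero_def by auto
  have f0: "f 0 = 0" using Zp_mod[OF assms, of 0] by simp
  with n obtain n' where n': "f (Suc n') \<noteq> 0" by (cases n) auto
  define L where "L = (LEAST n. f (Suc n) \<noteq> 0)"
  have ordL: "zp_ord p f = enat L" using False by (simp add: zp_ord_def L_def)
  have fL: "f (Suc L) \<noteq> 0" unfolding L_def using n' by (rule LeastI)
  have below: "f (Suc j) = 0" if "j < L" for j
    using not_less_Least[of j "\<lambda>n. f (Suc n) \<noteq> 0"] that unfolding L_def by simp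
  show ?thesis
  proof
    assume "enat d \<le> zp_ord p f"
    then have "d \<le> L" using ordL by simp
    then show "f d = 0" using below f0 by (cases d) auto
  next
    assume fd: "f d = 0"
    show "enat d \<le> zp_ord p f"
    proof (rule ccontr)
      assume "\<not> enat d \<le> zp_ord p f"
      then have "Suc L \<le> d" using ordL by simp
      then have "f d mod p ^ Suc L = f (Suc L)" by (rule Zp_le[OF assms])
      with fd fL show False by simp
    qed
  qed
qed


lemma in_pow_ideal_I: assumes "f \<in> Zp p" "f N = 0" "p > 1" shows "in_pow_ideal p N f"
proof -
  define w where "w = (\<lambda>n. f (n + N) div p ^ N)"
  have dvdN: "p ^ N dvd f n" if "N \<le> n" for n
  proof -
    have "f n mod p ^ N = 0" using Zp_le[OF assms(1) that] assms(2) by simp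
    then show ?thesis by (simp add: dvd_eq_mod_eq_0)
  qed
  have pos: "p ^ N > 0" using assms(3) by simp
  have fw: "f (n+N) = p^N * w n" for n unfolding w_def using dvdN[of "n+N"] by simp
  have wZ: "w \<in> Zp p"
    unfolding Zp_def
  proof (safe)
    fix n
    have r: "0 \<le> f (n+N)" "f (n+N) < p ^ (n+N)" using assms(1) unfolding Zp_def by auto
    show "0 \<le> w n" using r pos fw[of n] by (simp add: zero_le_mult_iff)
    have "p^N * w n < p^N * p^n" using r fw[of n] by (simp add: power_add mult.commute)
    then show "w n < p ^ n" using pos by simp
    have "f (Suc n + N) mod p ^ (n+N) = f (n+N)" by (rule Zp_le[OF assms(1)]) simp
    then have "(p^N * w (Suc n)) mod (p^N * p^n) = p^N * w n" 
      unfolding fw[of n] fw[of "Suc n"] by (simp add: power_add mult.commute)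
    then have "p^N * (w (Suc n) mod p^n) = p^N * w n" by (metis mult_mod_right)
    then show "w (Suc n) mod p ^ n = w n" using pos assms(3) by simp
  qed
  have "f = zp_mult p (zp_of_int p (p ^ N)) w"
  proof
    fix n
    show "f n = zp_mult p (zp_of_int p (p ^ N)) w n"
    proof (cases "n \<le> N")
      case True
      have "f n = 0" using Zp_le[OF assms(1) True] assms(2) by simp
      moreover have "p ^ N mod p ^ n = 0" using True by (simp add: le_imp_power_dvd)
      ultimately show ?thesis by (simp add: zp_mult_def zp_of_int_def)
    next
      case False
      have "p ^ N < p ^ n" using False assms(3) by (simp add: power_strict_increasing)
      then have "p ^ N mod p ^ n = p ^ N" using pos by simp
      moreover have "f (n+N) mod p^n = f n" by (rule Zp_le[OF assms(1)]) simp
      ultimately show ?thesis using fw[of n] by (simp add: zp_mult_def zp_of_int_def)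
    qed
  qed
  then show ?thesis unfolding in_pow_ideal_def using wZ by blast
qed

lemma cong_scale:
  fixes p A x y :: int
  assumes "p ^ m dvd A" "[x = y] (mod p ^ K)"
  shows "[A * x = A * y] (mod p ^ (K + m))"
proof -
  obtain B where B: "A = p ^ m * B" using assms(1) by blast
  have "p ^ K dvd x - y" using assms(2) by (simp add: cong_iff_dvd_diff)
  then have "p ^ K * p ^ m dvd (x - y) * (p ^ m * B)" by (simp add: mult_dvd_mono)
  then show ?thesis unfolding B by (simp add: cong_iff_dvd_diff power_add algebra_simps)
qed

lemma reduced_eq:
  fixes c c' M :: int
  assumes "M dvd c - c'" "0 \<le> c" "c < M" "0 \<le> c'" "c' < M"
  shows "c = c'"
proof -
  have "[c = c'] (mod M)" using assms(1) by (simp add: cong_iff_dvd_diff)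
  then show ?thesis using assms unfolding cong_def by simp
qed

lemma not_dvd_shift:
  fixes p T :: int
  assumes "p ^ m dvd T" "\<not> p ^ Suc m dvd T"
  obtains U where "T = p ^ m * U" "\<not> p dvd U"
proof -
  obtain U where U: "T = p ^ m * U" using assms(1) by blast
  have "\<not> p dvd U"
  proof
    assume "p dvd U"
    then have "p ^ m * p dvd p ^ m * U" by simp
    then show False using assms(2) U by (simp add: mult.commute)
  qed
  then show ?thesis using U that by blast
qed


lemma odd_prime_not_dvd_2: fixes p :: int assumes "prime p" "odd p" shows "\<not> p dvd 2"
proof
  assume "p dvd 2"
  then have "p \<le> 2" by (simp add: zdvd_imp_le)
  moreover have "p > 1" using assms(1) prime_gt_1_int by blast
  ultimately have "p = 2" by simp
  with assms(2) show False by simp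
qed

lemma cong_pow_le: fixes a b p :: int
  assumes "[a = b] (mod p ^ K)" "n \<le> K" shows "[a = b] (mod p ^ n)"
  by (rule cong_dvd_modulus[OF assms(1) le_imp_power_dvd[OF assms(2)]])

lemma cong_mod_self: fixes a M :: int shows "[a mod M = a] (mod M)"
  by (simp add: cong_def)

lemma hensel:
  fixes p c0 :: int and T g :: "nat \<Rightarrow> int"
  assumes p: "prime p" "odd p" and cT: "coh p T" and cg: "coh p g"
    and T1: "p ^ m dvd T (Suc m)" and T2: "\<not> p ^ Suc m dvd T (Suc m)"
    and g0: "[g (Suc m) = T (Suc m) * c0^2] (mod p ^ Suc m)" and c0: "\<not> p dvd c0"
  shows "\<exists>C \<in> Zp p. \<forall>n. [T n * (C n)^2 = g n] (mod p ^ n)"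
proof -
  have p1: "p > 1" using p(1) prime_gt_1_int by blast
  have Tsh: "p ^ m dvd T (N + m) \<and> \<not> p ^ Suc m dvd T (N + m)" if "N \<ge> 1" for N
  proof -
    have "[T (N + m) = T (Suc m)] (mod p ^ Suc m)" by (rule coh_le[OF cT]) (use that in simp)
    then have d: "p ^ Suc m dvd T (N + m) - T (Suc m)" by (simp add: cong_iff_dvd_diff)
    have pm: "p ^ m dvd p ^ Suc m" by (simp add: le_imp_power_dvd)
    have e1: "T (N + m) = (T (N + m) - T (Suc m)) + T (Suc m)" by simp
    have "p ^ m dvd (T (N + m) - T (Suc m)) + T (Suc m)"
      by (rule dvd_add[OF dvd_trans[OF pm d] T1])
    then have a: "p ^ m dvd T (N + m)" using e1 by simp
    have b: "\<not> p ^ Suc m dvd T (N + m)"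
    proof
      assume "p ^ Suc m dvd T (N + m)"
      then have "p ^ Suc m dvd T (N + m) - (T (N + m) - T (Suc m))" using d by (rule dvd_diff)
      then show False using T2 by simp
    qed
    show ?thesis using a b by blast
  qed
  define Good where "Good N c \<longleftrightarrow> 0 \<le> c \<and> c < p ^ N \<and> [c = c0] (mod p)
      \<and> [T (N + m) * c^2 = g (N + m)] (mod p ^ (N + m))" for N c
  have uniq: "c = c'" if N1: "N \<ge> 1" and "Good N c" "Good N c'" for N c c'
  proof -
    have TN: "p ^ m dvd T (N + m)" "\<not> p ^ Suc m dvd T (N + m)" using Tsh[OF N1] by auto
    obtain U where U: "T (N + m) = p ^ m * U" "\<not> p dvd U" using not_dvd_shift[OF TN] by blast
    have h1: "[T (N + m) * c^2 = g (N + m)] (mod p ^ (N + m))"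
      and h2: "[T (N + m) * c'^2 = g (N + m)] (mod p ^ (N + m))" using that(2,3) unfolding Good_def by auto
    have "[T (N + m) * c^2 = T (N + m) * c'^2] (mod p ^ (N + m))"
      by (rule cong_trans[OF h1 cong_sym[OF h2]])
    then have "p ^ m * p ^ N dvd p ^ m * (U * ((c - c') * (c + c')))"
      unfolding U by (simp add: cong_iff_dvd_diff power_add algebra_simps power2_eq_square)
    then have d1: "p ^ N dvd U * ((c - c') * (c + c'))" using p1 by simp
    have cU: "coprime (p ^ N) U" using U(2) p(1) by (simp add: prime_imp_coprime)
    have hc1: "[c = c0] (mod p)" and hc2: "[c' = c0] (mod p)" using that(2,3) unfolding Good_def by auto
    have hc: "[c + c' = c0 + c0] (mod p)" by (rule cong_add[OF hc1 hc2])
    have "\<not> p dvd c0 + c0"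
    proof
      assume "p dvd c0 + c0"
      then have "p dvd 2 * c0" by simp
      then have "p dvd 2 \<or> p dvd c0" using p(1) by (simp add: prime_dvd_mult_iff)
      then show False using c0 odd_prime_not_dvd_2[OF p] by blast
    qed
    then have "\<not> p dvd c + c'" using cong_dvd_iff[OF hc] by simp
    then have cS: "coprime (p ^ N) (c + c')" using p(1) by (simp add: prime_imp_coprime)
    have "p ^ N dvd (c - c') * (c + c')"
      using d1 coprime_dvd_mult_right_iff[OF cU] by simp
    then have "p ^ N dvd (c - c')"
      using coprime_dvd_mult_left_iff[OF cS] by simp
    then show ?thesis using that(2,3) unfolding Good_def by (intro reduced_eq) auto
  qed
  have step: "\<exists>c'. Good (Suc N) c'" if N1: "N \<ge> 1" and GN: "Good N c" for N c
  proof -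
    define T' where "T' = T (Suc N + m)"
    define g' where "g' = g (Suc N + m)"
    define P where "P = p ^ N"
    define Pm where "Pm = p ^ m"
    have cT': "[T' = T (N + m)] (mod p ^ (N + m))" unfolding T'_def by (rule coh_le[OF cT]) simp
    have cg': "[g' = g (N + m)] (mod p ^ (N + m))" unfolding g'_def by (rule coh_le[OF cg]) simp
    have hG: "[T (N + m) * c^2 = g (N + m)] (mod p ^ (N + m))" using GN unfolding Good_def by auto
    have hc: "[c = c0] (mod p)" using GN unfolding Good_def by auto
    have "[T' * c^2 = T (N + m) * c^2] (mod p ^ (N + m))" by (rule cong_mult[OF cT' cong_refl])
    then have "[T' * c^2 = g'] (mod p ^ (N + m))"
      by (rule cong_trans[OF _ cong_trans[OF hG cong_sym[OF cg']]])
    then have "p ^ (N + m) dvd T' * c^2 - g'" by (simp add: cong_iff_dvd_diff)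
    then obtain w where w: "T' * c^2 - g' = P * Pm * w" unfolding P_def Pm_def
      by (auto simp: power_add)
    have TS: "p ^ m dvd T' \<and> \<not> p ^ Suc m dvd T'" unfolding T'_def using Tsh[of "Suc N"] by simp
    then obtain U where U: "T' = Pm * U" "\<not> p dvd U" unfolding Pm_def using not_dvd_shift by blast
    have "\<not> p dvd c" using hc c0 cong_dvd_iff by blast
    then have "\<not> p dvd 2 * U * c" using U(2) odd_prime_not_dvd_2[OF p] p(1)
      by (simp add: prime_dvd_mult_iff)
    then have "coprime p (2 * U * c)" by (rule prime_imp_coprime[OF p(1)])
    then have "coprime (2 * U * c) p" by (simp add: coprime_commute)
    then obtain x where x: "[2 * U * c * x = 1] (mod p)" using cong_solve_coprime_int by blast
    define r where "r = - w * x"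
    have "p dvd 1 - 2 * U * c * x" using x by (simp add: cong_iff_dvd_diff dvd_diff_commute)
    then have "p dvd w * (1 - 2 * U * c * x)" by simp
    then have pd: "p dvd w + 2 * U * c * r" unfolding r_def by (simp add: algebra_simps)
    define c1 where "c1 = c + P * r"
    have expand: "T' * c1^2 - g' = P * Pm * (w + 2 * U * c * r) + P * Pm * (P * (U * r^2))"
    proof -
      have "T' * c1^2 - g' = (T' * c^2 - g') + T' * (2 * c * P * r + P^2 * r^2)"
        unfolding c1_def by (simp add: algebra_simps power2_eq_square)
      also have "\<dots> = P * Pm * w + Pm * U * (2 * c * P * r + P^2 * r^2)" using w U(1) by simp
      also have "\<dots> = P * Pm * (w + 2 * U * c * r) + P * Pm * (P * (U * r^2))"
        by (simp add: algebra_simps power2_eq_square)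
      finally show ?thesis .
    qed
    have pP: "p dvd P" unfolding P_def using N1 by (simp add: dvd_power)
    have "P * Pm * p dvd P * Pm * (w + 2 * U * c * r)" using pd by simp
    moreover have "P * Pm * p dvd P * Pm * (P * (U * r^2))" using pP by simp
    ultimately have "P * Pm * p dvd T' * c1^2 - g'" unfolding expand by (rule dvd_add)
    then have e1: "[T' * c1^2 = g'] (mod p ^ (Suc N + m))"
      unfolding P_def Pm_def by (simp add: cong_iff_dvd_diff power_add ac_simps)
    define c' where "c' = c1 mod p ^ Suc N"
    have "[c'^2 = c1^2] (mod p ^ Suc N)" unfolding c'_def by (rule cong_pow[OF cong_mod_self])
    then have "[T' * c'^2 = T' * c1^2] (mod p ^ (Suc N + m))" using TS by (intro cong_scale) auto
    then have e2: "[T' * c'^2 = g'] (mod p ^ (Suc N + m))" using e1 by (rule cong_trans)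
    have "[c' = c1] (mod p)" unfolding c'_def
      by (rule cong_dvd_modulus[OF cong_mod_self]) (simp add: dvd_power)
    moreover have "[c1 = c] (mod p)" unfolding c1_def using pP
      by (simp add: cong_iff_dvd_diff)
    ultimately have e3: "[c' = c0] (mod p)" using hc by (meson cong_trans)
    have "0 \<le> c'" "c' < p ^ Suc N" unfolding c'_def using p1 by auto
    then have "Good (Suc N) c'" unfolding Good_def using e2 e3 unfolding T'_def g'_def by auto
    then show ?thesis by blast
  qed
  have base: "Good 1 (c0 mod p)"
  proof -
    have "[(c0 mod p)^2 = c0^2] (mod p ^ 1)" by (simp add: cong_pow cong_mod_self)
    then have "[T (Suc m) * (c0 mod p)^2 = T (Suc m) * c0^2] (mod p ^ (1 + m))"
      using T1 by (intro cong_scale) auto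
    then have "[T (Suc m) * (c0 mod p)^2 = T (Suc m) * c0^2] (mod p ^ Suc m)" by simp
    then have "[T (Suc m) * (c0 mod p)^2 = g (Suc m)] (mod p ^ Suc m)"
      by (rule cong_trans[OF _ cong_sym[OF g0]])
    then show ?thesis unfolding Good_def using p1 by (simp add: cong_mod_self)
  qed
  have ex: "\<exists>c. Good N c" if "N \<ge> 1" for N
    using that
  proof (induction N rule: dec_induct)
    case base
    then show ?case using \<open>Good 1 (c0 mod p)\<close> by blast
  next
    case (step N)
    then show ?case using \<open>\<And>N c. N \<ge> 1 \<Longrightarrow> Good N c \<Longrightarrow> \<exists>c'. Good (Suc N) c'\<close> by blast
  qed
  define C where "C N = (if N = 0 then 0 else (THE c. Good N c))" for N
  have CG: "Good N (C N)" if N1: "N \<ge> 1" for N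
  proof -
    have "\<exists>!c. Good N c" using ex[OF N1] uniq[OF N1] by blast
    then have "Good N (THE c. Good N c)" by (rule theI')
    then show ?thesis unfolding C_def using N1 by simp
  qed
  have restr: "Good n (d mod p ^ n)" if n1: "n \<ge> 1" and Gd: "Good (Suc n) d" for n d
  proof -
    have TS: "p ^ m dvd T (n + m)" using Tsh[OF n1] by simp
    have "[(d mod p ^ n)^2 = d^2] (mod p ^ n)" by (simp add: cong_pow cong_mod_self)
    then have a1: "[T (n + m) * (d mod p ^ n)^2 = T (n + m) * d^2] (mod p ^ (n + m))"
      using TS by (intro cong_scale) auto
    have "[T (Suc n + m) = T (n + m)] (mod p ^ (n + m))" by (rule coh_le[OF cT]) simp
    then have a2: "[T (n + m) * d^2 = T (Suc n + m) * d^2] (mod p ^ (n + m))"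
      by (rule cong_mult[OF cong_sym cong_refl])
    have "[T (Suc n + m) * d^2 = g (Suc n + m)] (mod p ^ (Suc n + m))" using Gd unfolding Good_def by auto
    then have a3: "[T (Suc n + m) * d^2 = g (Suc n + m)] (mod p ^ (n + m))"
      by (rule cong_pow_le) simp
    have a4: "[g (Suc n + m) = g (n + m)] (mod p ^ (n + m))" by (rule coh_le[OF cg]) simp
    have e: "[T (n + m) * (d mod p ^ n)^2 = g (n + m)] (mod p ^ (n + m))"
      using cong_trans[OF a1 cong_trans[OF a2 cong_trans[OF a3 a4]]] .
    have "[d mod p ^ n = d] (mod p)"
      by (rule cong_dvd_modulus[OF cong_mod_self]) (use n1 in \<open>simp add: dvd_power\<close>)
    moreover have "[d = c0] (mod p)" using Gd unfolding Good_def by auto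
    ultimately have "[d mod p ^ n = c0] (mod p)" by (rule cong_trans)
    then show ?thesis unfolding Good_def using e p1 by simp
  qed
  have CZ: "C \<in> Zp p"
    unfolding Zp_def
  proof (safe)
    fix n
    show "0 \<le> C n" using CG[of n] unfolding Good_def by (cases "n = 0") (auto simp: C_def)
    show "C n < p ^ n" using CG[of n] unfolding Good_def by (cases "n = 0") (auto simp: C_def)
    show "C (Suc n) mod p ^ n = C n"
    proof (cases "n = 0")
      case True then show ?thesis by (simp add: C_def)
    next
      case False
      then have n1: "n \<ge> 1" by simp
      have "Good n (C (Suc n) mod p ^ n)" by (rule restr[OF n1 CG]) simp
      then show ?thesis using uniq[OF n1 _ CG[OF n1]] by blast
    qed
  qed
  have "[T n * (C n)^2 = g n] (mod p ^ n)" for n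
  proof (cases "n = 0")
    case True then show ?thesis by simp
  next
    case False
    then have n1: "n \<ge> 1" by simp
    have "[T (n + m) * (C n)^2 = g (n + m)] (mod p ^ (n + m))" using CG[OF n1] unfolding Good_def by auto
    then have b1: "[T (n + m) * (C n)^2 = g (n + m)] (mod p ^ n)" by (rule cong_pow_le) simp
    have "[T (n + m) = T n] (mod p ^ n)" by (rule coh_le[OF cT]) simp
    then have b0: "[T n * (C n)^2 = T (n + m) * (C n)^2] (mod p ^ n)" by (rule cong_mult[OF cong_sym cong_refl])
    have b2: "[g (n + m) = g n] (mod p ^ n)" by (rule coh_le[OF cg]) simp
    show ?thesis using cong_trans[OF b0 cong_trans[OF b1 b2]] .
  qed
  then show ?thesis using CZ by blast
qed


lemma finish:
  fixes p t :: int and a x :: "nat \<Rightarrow> nat \<Rightarrow> int" and c :: "nat \<Rightarrow> int"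
  assumes p: "prime p" "odd p" and aZ: "\<And>l. l < k \<Longrightarrow> a l \<in> Zp p" and xv: "vec_Zp p k x"
    and j: "j < k" and T1: "p ^ m dvd a j (Suc m) * x j (Suc m) * x j (Suc m)"
    and T2: "\<not> p ^ Suc m dvd a j (Suc m) * x j (Suc m) * x j (Suc m)"
    and cj: "\<not> p dvd c j"
    and S: "p ^ Suc m dvd (\<Sum>l<k. a l (Suc m) * x l (Suc m) * x l (Suc m) * (c l)^2) - p ^ m * t"
  shows "\<exists>z. vec_Zp p k z \<and> diag_Q p a k z = zp_of_int p (p ^ m * t)"
proof -
  have p1: "p > 1" using p(1) prime_gt_1_int by blast
  define T where "T l n = a l n * x l n * x l n" for l n
  have cohT: "coh p (T l)" if "l < k" for l
    unfolding T_def using Zp_coh[OF aZ[OF that]] Zp_coh[of "x l" p] xv that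
    unfolding vec_Zp_def by (intro coh_mult) auto
  define R where "R = {..<k} - {j}"
  have fin: "finite R" unfolding R_def by simp
  have split: "(\<Sum>l<k. f l) = f j + (\<Sum>l\<in>R. f l)" for f :: "nat \<Rightarrow> int"
    unfolding R_def using j by (simp add: sum.remove)
  define g where "g n = p ^ m * t - (\<Sum>l\<in>R. T l n * (c l)^2)" for n
  have cohg: "coh p g" unfolding g_def
    by (intro coh_diff coh_const coh_sum coh_mult cohT) (auto simp: R_def)
  have g0: "[g (Suc m) = T j (Suc m) * (c j)^2] (mod p ^ Suc m)"
  proof -
    have "g (Suc m) - T j (Suc m) * (c j)^2 = - ((\<Sum>l<k. T l (Suc m) * (c l)^2) - p ^ m * t)"
      unfolding g_def split[of "\<lambda>l. T l (Suc m) * (c l)^2"] by simp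
    moreover have "p ^ Suc m dvd - ((\<Sum>l<k. T l (Suc m) * (c l)^2) - p ^ m * t)"
      using S unfolding T_def by (simp only: dvd_minus_iff)
    ultimately show ?thesis by (simp add: cong_iff_dvd_diff)
  qed
  obtain C where CZ: "C \<in> Zp p" and CT: "\<And>n. [T j n * (C n)^2 = g n] (mod p ^ n)"
    using hensel[OF p cohT[OF j] cohg _ _ g0 cj] T1 T2 unfolding T_def by blast
  define z where "z l n = (if l = j then (x l n * C n) mod p ^ n else (x l n * c l) mod p ^ n)" for l n
  have zv: "vec_Zp p k z" unfolding vec_Zp_def
  proof (intro allI impI)
    fix l assume l: "l < k"
    have cx: "coh p (x l)" using Zp_coh xv l unfolding vec_Zp_def by blast
    show "z l \<in> Zp p"
    proof (cases "l = j")
      case True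
      have "(\<lambda>n. x l n * C n mod p ^ n) \<in> Zp p"
        by (rule coh_red[OF coh_mult[OF cx Zp_coh[OF CZ]] p1])
      then show ?thesis unfolding z_def using True by simp
    next
      case False
      have "(\<lambda>n. x l n * c l mod p ^ n) \<in> Zp p"
        by (rule coh_red[OF coh_mult[OF cx coh_const] p1])
      then show ?thesis unfolding z_def using False by simp
    qed
  qed
  have "diag_Q p a k z n = zp_of_int p (p ^ m * t) n" for n
  proof -
    define F where "F l = (if l = j then T l n * (C n)^2 else T l n * (c l)^2)" for l
    have "[a l n * z l n * z l n = F l] (mod p ^ n)" for l
    proof (cases "l = j")
      case True
      have zz: "z l n = x l n * C n mod p ^ n" using True by (simp add: z_def)
      have "[a l n * z l n * z l n = a l n * (x l n * C n) * (x l n * C n)] (mod p ^ n)"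
        unfolding zz by (intro cong_mult cong_refl cong_mod_self) 
      then show ?thesis unfolding F_def T_def using True by (simp add: power2_eq_square ac_simps)
    next
      case False
      have zz: "z l n = x l n * c l mod p ^ n" using False by (simp add: z_def)
      have "[a l n * z l n * z l n = a l n * (x l n * c l) * (x l n * c l)] (mod p ^ n)"
        unfolding zz by (intro cong_mult cong_refl cong_mod_self) 
      then show ?thesis unfolding F_def T_def using False by (simp add: power2_eq_square ac_simps)
    qed
    then have "[(\<Sum>l<k. a l n * z l n * z l n) = (\<Sum>l<k. F l)] (mod p ^ n)"
      by (rule cong_sum)
    moreover have "(\<Sum>l<k. F l) = T j n * (C n)^2 + (\<Sum>l\<in>R. T l n * (c l)^2)"
      unfolding split[of F] unfolding F_def R_def by simp
    moreover have "[T j n * (C n)^2 + (\<Sum>l\<in>R. T l n * (c l)^2) = g n + (\<Sum>l\<in>R. T l n * (c l)^2)] (mod p ^ n)"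
      by (rule cong_add[OF CT cong_refl])
    moreover have "g n + (\<Sum>l\<in>R. T l n * (c l)^2) = p ^ m * t" unfolding g_def by simp
    ultimately have "[(\<Sum>l<k. a l n * z l n * z l n) = p ^ m * t] (mod p ^ n)"
      by (metis cong_trans)
    then show ?thesis unfolding diag_Q_def diag_B_def zp_of_int_def cong_def by simp
  qed
  then have "diag_Q p a k z = zp_of_int p (p ^ m * t)" by blast
  then show ?thesis using zv by blast
qed


lemma represent:
  fixes p t :: int and a x :: "nat \<Rightarrow> nat \<Rightarrow> int"
  assumes p: "prime p" "odd p" and aZ: "\<And>l. l < k \<Longrightarrow> a l \<in> Zp p" and xv: "vec_Zp p k x"
    and H1: "\<And>l. l < k \<Longrightarrow> p ^ m dvd a l (Suc m) * x l (Suc m) * x l (Suc m)"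
    and j: "j < k" and H2: "\<not> p ^ Suc m dvd a j (Suc m) * x j (Suc m) * x j (Suc m)"
    and H3: "p ^ Suc m dvd (\<Sum>l<k. a l (Suc m) * x l (Suc m) * x l (Suc m))"
  shows "\<exists>z. vec_Zp p k z \<and> diag_Q p a k z = zp_of_int p (p ^ m * t)"
proof -
  define T where "T l = a l (Suc m) * x l (Suc m) * x l (Suc m)" for l
  define R where "R = {..<k} - {j}"
  have split: "(\<Sum>l<k. f l) = f j + (\<Sum>l\<in>R. f l)" for f :: "nat \<Rightarrow> int"
    unfolding R_def using j by (simp add: sum.remove)
  have fin: "finite R" unfolding R_def by simp
  have H3': "p ^ Suc m dvd (\<Sum>l<k. T l)" using H3 unfolding T_def .
  show ?thesis
  proof (cases "p dvd t")
    case True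
    have "p ^ Suc m dvd p ^ m * t" using True by (simp add: mult_dvd_mono)
    then have "p ^ Suc m dvd (\<Sum>l<k. T l * 1^2) - p ^ m * t" using H3' by simp
    then show ?thesis
      using finish[where c="\<lambda>_. 1" and t=t and a=a and x=x and k=k and m=m and j=j, OF p aZ xv j H1[OF j] H2]
        prime_gt_1_int[OF p(1)] unfolding T_def by simp
  next
    case False
    obtain U where U: "T j = p ^ m * U" "\<not> p dvd U" using not_dvd_shift H1[OF j] H2 unfolding T_def by blast
    have "\<not> p dvd 2 * U" using U(2) odd_prime_not_dvd_2[OF p] p(1) by (simp add: prime_dvd_mult_iff)
    then have "coprime p (2 * U)" by (rule prime_imp_coprime[OF p(1)])
    then have "coprime (2 * U) p" by (simp add: coprime_commute)
    then obtain y where y: "[2 * U * y = 1] (mod p)" using cong_solve_coprime_int by blast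
    define lam where "lam = (t - U) * y"
    have "[(2 * U * y) * (t - U) + U = 1 * (t - U) + U] (mod p)"
      by (intro cong_add cong_mult y cong_refl)
    then have lt: "[(2 * lam + 1) * U = t] (mod p)" unfolding lam_def by (simp add: algebra_simps)
    define c where "c l = (if l = j then lam + 1 else lam)" for l
    have sumc: "(\<Sum>l<k. T l * (c l)^2) = lam^2 * (\<Sum>l<k. T l) + (2 * lam + 1) * T j"
    proof -
      have "(\<Sum>l\<in>R. T l * (c l)^2) = (\<Sum>l\<in>R. lam^2 * T l)"
        by (rule sum.cong) (auto simp: R_def c_def)
      then show ?thesis unfolding split[of "\<lambda>l. T l * (c l)^2"] split[of T]
        by (simp add: c_def sum_distrib_left algebra_simps power2_eq_square)
    qed
    have "p dvd (2 * lam + 1) * U - t" using lt by (simp add: cong_iff_dvd_diff)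
    then have "p ^ m * p dvd p ^ m * ((2 * lam + 1) * U - t)" by (rule mult_dvd_mono[OF dvd_refl])
    then have d2: "p ^ Suc m dvd (2 * lam + 1) * T j - p ^ m * t" unfolding U(1)
      by (simp add: algebra_simps)
    have d1: "p ^ Suc m dvd lam^2 * (\<Sum>l<k. T l)" using H3' by simp
    have S: "p ^ Suc m dvd (\<Sum>l<k. T l * (c l)^2) - p ^ m * t"
      unfolding sumc using dvd_add[OF d1 d2] by (simp add: algebra_simps)
    show ?thesis
    proof (cases "p dvd lam + 1")
      case False
      then have "\<not> p dvd c j" unfolding c_def by simp
      then show ?thesis using finish[where c=c and t=t and a=a and x=x and k=k and m=m and j=j, OF p aZ xv j H1[OF j] H2] S unfolding T_def by blast
    next
      case True
      have "\<exists>i\<in>R. \<not> p ^ Suc m dvd T i"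
      proof (rule ccontr)
        assume "\<not> ?thesis"
        then have "p ^ Suc m dvd (\<Sum>l\<in>R. T l)" by (intro dvd_sum) auto
        then have "p ^ Suc m dvd (\<Sum>l<k. T l) - (\<Sum>l\<in>R. T l)" using H3' by (rule dvd_diff[rotated])
        moreover have "(\<Sum>l<k. T l) - (\<Sum>l\<in>R. T l) = T j" using split[of T] by simp
        ultimately show False using H2 unfolding T_def by simp
      qed
      then obtain i where i: "i \<in> R" "\<not> p ^ Suc m dvd T i" by blast
      have ik: "i < k" "i \<noteq> j" using i(1) unfolding R_def by auto
      have "\<not> p dvd lam"
      proof
        assume "p dvd lam"
        then have "p dvd (lam + 1) - lam" using True by (rule dvd_diff[rotated])
        then show False using p(1) by (simp add: prime_int_iff)
      qed
      then have "\<not> p dvd c i" unfolding c_def using ik by simp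
      then show ?thesis using finish[where c=c and t=t and a=a and x=x and k=k and m=m and j=i, OF p aZ xv ik(1) H1[OF ik(1)]] i(2) S unfolding T_def by blast
    qed
  qed
qed


lemma exists_nonres:
  fixes p :: int assumes p: "prime p" "odd p"
  shows "\<exists>d. 0 < d \<and> d < p \<and> \<not> QuadRes p d"
proof -
  have p1: "p > 1" using p(1) prime_gt_1_int by blast
  have p3: "p > 2" using p1 p(2) by (cases "p = 2") auto
  define A where "A = {1..p-1}"
  define f where "f y = y^2 mod p" for y :: int
  have ndvd: "\<not> p dvd y" if "y \<in> A" for y
    using that unfolding A_def by (auto dest: zdvd_imp_le)
  have fA: "f ` A \<subseteq> A"
  proof
    fix d assume "d \<in> f ` A"
    then obtain y where y: "y \<in> A" "d = f y" by blast
    have "\<not> p dvd y^2" using ndvd[OF y(1)] p(1) by (simp add: prime_dvd_power_iff)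
    then have "d \<noteq> 0" unfolding y(2) f_def by (simp add: dvd_eq_mod_eq_0)
    moreover have "0 \<le> d" "d < p" unfolding y(2) f_def using p1 by auto
    ultimately show "d \<in> A" unfolding A_def by auto
  qed
  have "f 1 = f (p - 1)"
  proof -
    have "(p - 1)^2 = 1 + p * (p - 2)" by (simp add: power2_eq_square algebra_simps)
    then show ?thesis unfolding f_def by simp
  qed
  moreover have "1 \<in> A" "p - 1 \<in> A" "1 \<noteq> p - 1" unfolding A_def using p3 by auto
  ultimately have "\<not> inj_on f A" unfolding inj_on_def by blast
  moreover have finA: "finite A" unfolding A_def by simp
  ultimately have "card (f ` A) \<noteq> card A" using eq_card_imp_inj_on by blast
  then have "f ` A \<noteq> A" by auto
  then obtain d where d: "d \<in> A" "d \<notin> f ` A" using fA by blast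
  have "\<not> QuadRes p d"
  proof
    assume "QuadRes p d"
    then obtain y where y: "[y^2 = d] (mod p)" unfolding QuadRes_def by blast
    define y' where "y' = y mod p"
    have "[y'^2 = y^2] (mod p)" unfolding y'_def by (simp add: cong_pow cong_mod_self)
    then have "[y'^2 = d] (mod p)" using y by (rule cong_trans)
    then have fy: "f y' = d" unfolding f_def using d(1) unfolding A_def cong_def by simp
    have "y' \<noteq> 0"
    proof
      assume "y' = 0"
      then have "f y' = 0" unfolding f_def by simp
      then show False using fy d(1) unfolding A_def by simp
    qed
    moreover have "0 \<le> y'" "y' < p" unfolding y'_def using p1 by auto
    ultimately have "y' \<in> A" unfolding A_def by auto
    then show False using fy d(2) by blast
  qed
  moreover have "0 < d" "d < p" using d(1) unfolding A_def by auto
  ultimately show ?thesis by blast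
qed

lemma nonsq_props: fixes p :: int assumes "prime p" "odd p"
  shows "0 < nonsq p" "nonsq p < p" "\<not> p dvd nonsq p"
proof -
  have h: "0 < nonsq p \<and> nonsq p < p \<and> \<not> QuadRes p (nonsq p)"
    unfolding nonsq_def by (rule someI_ex[OF exists_nonres[OF assms]])
  then show "0 < nonsq p" "nonsq p < p" by auto
  then show "\<not> p dvd nonsq p" by (auto dest: zdvd_imp_le)
qed

lemma not_dvd_pow: fixes p w :: int
  assumes "prime p" "\<not> p dvd w" "e < K" shows "\<not> p ^ K dvd p ^ e * w"
proof
  assume h: "p ^ K dvd p ^ e * w"
  have "p ^ K = p ^ e * p ^ (K - e)" using assms(3) by (simp flip: power_add)
  then have "p ^ e * p ^ (K - e) dvd p ^ e * w" using h by simp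
  then have "p ^ (K - e) dvd w" using assms(1) by (simp add: prime_gt_0_int)
  moreover have "p dvd p ^ (K - e)" using assms(3) by (simp add: dvd_power)
  ultimately show False using assms(2) dvd_trans by blast
qed

lemma nu_s_le:
  fixes p w :: int and a :: "nat \<Rightarrow> nat \<Rightarrow> int"
  assumes p: "prime p" "odd p"
    and Rep: "\<And>t. \<exists>z. vec_Zp p k z \<and> diag_Q p a k z = zp_of_int p (p ^ m * t)"
    and b: "b \<le> 1" and w: "\<not> p dvd w"
  shows "nu_s p a k (zp_of_int p (p ^ b * w)) \<le> enat (Suc m)"
proof -
  have p1: "p > 1" using p(1) prime_gt_1_int by blast
  define s where "s = zp_of_int p (p ^ b * w)"
  have prod: "zp_mult p s (zp_of_int p (p ^ (2 * u))) = zp_of_int p (p ^ (b + 2 * u) * w)" for u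
    unfolding s_def zp_mult_def zp_of_int_def
    by (rule ext) (simp add: mod_mult_eq power_add ac_simps)
  define R where "R = (\<lambda>u. \<exists>x. vec_Zp p k x \<and> diag_Q p a k x = zp_mult p s (zp_of_int p (p ^ (2 * u))))"
  define u where "u = (m + 1 - b) div 2"
  have r1: "m \<le> b + 2 * u" and r2: "b + 2 * u \<le> Suc m" unfolding u_def using b by presburger+
  have "p ^ (b + 2 * u) * w = p ^ m * (p ^ (b + 2 * u - m) * w)"
    using r1 by (simp add: power_add[symmetric])
  then have Ru: "R u" unfolding R_def prod using Rep by metis
  define L where "L = (LEAST u. R u)"
  have Lu: "L \<le> u" unfolding L_def using Ru by (rule Least_le)
  have nus: "nu_s p a k s = zp_ord p (zp_of_int p (p ^ (b + 2 * L) * w))"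
  proof -
    have "nu_s p a k s = (if (\<exists>u. R u) then zp_ord p (zp_mult p s (zp_of_int p (p ^ (2 * (LEAST u. R u))))) else \<infinity>)"
      unfolding nu_s_def Let_def R_def by simp
    then show ?thesis using Ru unfolding L_def[symmetric] prod by auto
  qed
  have Z: "zp_of_int p (p ^ (b + 2 * L) * w) \<in> Zp p"
    unfolding zp_of_int_def by (rule coh_red[OF coh_const p1])
  have "\<not> p ^ Suc (Suc m) dvd p ^ (b + 2 * L) * w"
    by (rule not_dvd_pow[OF p(1) w]) (use Lu r2 in simp)
  then have "zp_of_int p (p ^ (b + 2 * L) * w) (Suc (Suc m)) \<noteq> 0"
    unfolding zp_of_int_def by (simp add: dvd_eq_mod_eq_0)
  then have "\<not> enat (Suc (Suc m)) \<le> nu_s p a k s" unfolding nus using ord_ge_iff[OF Z] by simp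
  then show ?thesis unfolding s_def[symmetric] by (cases "nu_s p a k s") auto
qed

lemma nu_le:
  fixes p :: int and a :: "nat \<Rightarrow> nat \<Rightarrow> int"
  assumes p: "prime p" "odd p"
    and Rep: "\<And>t. \<exists>z. vec_Zp p k z \<and> diag_Q p a k z = zp_of_int p (p ^ m * t)"
  shows "nu p a k \<le> enat (Suc m)"
proof -
  have d: "\<not> p dvd nonsq p" using nonsq_props[OF p] by simp
  have n1: "\<not> p dvd 1" using prime_gt_1_int[OF p(1)] by simp
  have "nu_s p a k s \<le> enat (Suc m)" if "s \<in> SC p" for s
  proof -
    have "s = zp_of_int p (p ^ 0 * 1) \<or> s = zp_of_int p (p ^ 0 * nonsq p)
      \<or> s = zp_of_int p (p ^ 1 * 1) \<or> s = zp_of_int p (p ^ 1 * nonsq p)"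
      using that unfolding SC_def by auto
    then show ?thesis using nu_s_le[OF p Rep, of 0 1] nu_s_le[OF p Rep, of 0 "nonsq p"]
      nu_s_le[OF p Rep, of 1 1] nu_s_le[OF p Rep, of 1 "nonsq p"] d n1 by auto
  qed
  then show ?thesis unfolding nu_def by (simp add: Sup_le_iff)
qed


lemma sq_root_dvd: fixes p z :: int assumes "prime p" "p ^ (2 * N) dvd z^2" shows "p ^ N dvd z"
proof (cases "z = 0")
  case True then show ?thesis by simp
next
  case False
  have nu: "\<not> is_unit p" using assms(1) by (simp add: prime_int_iff)
  have "2 * N \<le> multiplicity p (z^2)"
    using assms(2) power_dvd_iff_le_multiplicity[of "z^2" p] False nu by simp
  moreover have "multiplicity p (z^2) = 2 * multiplicity p z"
    using prime_elem_multiplicity_power_distrib[OF prime_imp_prime_elem[OF assms(1)] False, of 2] by simp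
  ultimately have "N \<le> multiplicity p z" by simp
  then show ?thesis by (rule multiplicity_dvd')
qed

lemma mixed_dvd: fixes p A X Y :: int
  assumes "prime p" "p ^ N dvd A * X * X" "p ^ N dvd A * Y * Y" shows "p ^ N dvd A * X * Y"
proof -
  have "p ^ N * p ^ N dvd (A * X * X) * (A * Y * Y)" using assms(2,3) by (rule mult_dvd_mono)
  moreover have "(A * X * X) * (A * Y * Y) = (A * X * Y)^2" by (simp add: power2_eq_square ac_simps)
  ultimately have "p ^ (2 * N) dvd (A * X * Y)^2" by (simp add: mult_2 power_add)
  then show ?thesis by (rule sq_root_dvd[OF assms(1)])
qed

lemma main_bound:
  fixes p :: int and a x :: "nat \<Rightarrow> nat \<Rightarrow> int"
  assumes p: "prime p" "odd p" and aZ: "\<And>l. l < k \<Longrightarrow> a l \<in> Zp p" and xv: "vec_Zp p k x"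
    and hq: "zp_ord p (diag_Q p a k x) = nu p a k"
  shows "\<forall>l<k. p ^ (the_enat (nu p a k) - 1) dvd a l (the_enat (nu p a k) - 1) * x l (the_enat (nu p a k) - 1) * x l (the_enat (nu p a k) - 1)"
proof (rule ccontr)
  have p1: "p > 1" using p(1) prime_gt_1_int by blast
  define N where "N = the_enat (nu p a k) - 1"
  define T where "T l n = a l n * x l n * x l n" for l n
  have cohT: "coh p (T l)" if "l < k" for l
    unfolding T_def using Zp_coh[OF aZ[OF that]] Zp_coh[of "x l" p] xv that
    unfolding vec_Zp_def by (intro coh_mult) auto
  define D where "D d = (\<forall>l<k. p ^ d dvd T l d)" for d
  assume "\<not> ?thesis"
  then have nDN: "\<not> D N" unfolding D_def T_def N_def by blast
  have D0: "D 0" unfolding D_def by simp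
  have N0: "N \<noteq> 0"
  proof
    assume "N = 0" then show False using nDN D0 by simp
  qed
  define m where "m = (LEAST d. \<not> D (Suc d))"
  have ex: "\<not> D (Suc (N - 1))" using nDN N0 by simp
  have mle: "m \<le> N - 1" unfolding m_def using ex by (rule Least_le)
  have nDm: "\<not> D (Suc m)" unfolding m_def using ex by (rule LeastI)
  have Dm: "D m"
  proof (cases m)
    case 0 then show ?thesis using D0 by simp
  next
    case (Suc m')
    have "m' < m" using Suc by simp
    then have "\<not> \<not> D (Suc m')" unfolding m_def by (rule not_less_Least)
    then show ?thesis using Suc by simp
  qed
  have H1: "p ^ m dvd a l (Suc m) * x l (Suc m) * x l (Suc m)" if l: "l < k" for l
  proof -
    have "[T l (Suc m) = T l m] (mod p ^ m)" by (rule coh_le[OF cohT[OF l]]) simp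
    moreover have "p ^ m dvd T l m" using Dm l unfolding D_def by blast
    ultimately show ?thesis unfolding T_def using cong_dvd_iff by blast
  qed
  obtain j where j: "j < k" "\<not> p ^ Suc m dvd a j (Suc m) * x j (Suc m) * x j (Suc m)"
    using nDm unfolding D_def T_def by blast
  have QZ: "diag_Q p a k x \<in> Zp p" unfolding diag_Q_def diag_B_def
    by (rule coh_red[OF _ p1]) (intro coh_sum coh_mult, use aZ xv Zp_coh in \<open>auto simp: vec_Zp_def\<close>)
  have geq: "enat (Suc m) \<le> nu p a k"
  proof (cases "nu p a k")
    case (enat n)
    then have "N = n - 1" unfolding N_def by simp
    then show ?thesis using enat mle N0 by simp
  next
    case infinity then show ?thesis by simp
  qed
  then have "diag_Q p a k x (Suc m) = 0" using ord_ge_iff[OF QZ] hq by simp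
  then have H3: "p ^ Suc m dvd (\<Sum>l<k. a l (Suc m) * x l (Suc m) * x l (Suc m))"
    unfolding diag_Q_def diag_B_def by (simp add: dvd_eq_mod_eq_0)
  have Rep: "\<exists>z. vec_Zp p k z \<and> diag_Q p a k z = zp_of_int p (p ^ m * t)" for t
    by (rule represent[OF p aZ xv H1 j H3])
  have "nu p a k \<le> enat (Suc m)" by (rule nu_le[OF p Rep])
  moreover have "enat (Suc (Suc m)) \<le> nu p a k"
  proof (cases "nu p a k")
    case (enat n)
    then have "N = n - 1" unfolding N_def by simp
    then show ?thesis using enat mle N0 by simp
  next
    case infinity then show ?thesis by simp
  qed
  ultimately have "enat (Suc (Suc m)) \<le> enat (Suc m)" by (metis order_trans)
  then show False by simp
qed


theorem lemma2p8:
  fixes p :: int and k :: nat and e :: "nat \<Rightarrow> nat" and eps :: "nat \<Rightarrow> nat \<Rightarrow> int"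
  assumes "prime p" and "odd p" and "k \<ge> 4"
    and "e 0 = 0" and "\<And>i j. i \<le> j \<Longrightarrow> j < k \<Longrightarrow> e i \<le> e j"
    and "\<And>i. i < k \<Longrightarrow> zp_unit p (eps i)"
    and "anisotropic p (lat_coeff p e eps) 3"
  shows "\<forall>x y. vec_Zp p k x \<and> vec_Zp p k y
      \<and> zp_ord p (diag_Q p (lat_coeff p e eps) k x) = nu p (lat_coeff p e eps) k
      \<and> zp_ord p (diag_Q p (lat_coeff p e eps) k y) = nu p (lat_coeff p e eps) k
      \<longrightarrow> in_pow_ideal p (the_enat (nu p (lat_coeff p e eps) k) - 1)
            (diag_B p (lat_coeff p e eps) k x y)"
proof (intro allI impI)
  fix x y
  assume h: "vec_Zp p k x \<and> vec_Zp p k y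
      \<and> zp_ord p (diag_Q p (lat_coeff p e eps) k x) = nu p (lat_coeff p e eps) k
      \<and> zp_ord p (diag_Q p (lat_coeff p e eps) k y) = nu p (lat_coeff p e eps) k"
  have pp: "prime p" "odd p" using assms(1,2) .
  have p1: "p > 1" using assms(1) prime_gt_1_int by blast
  define a where "a = lat_coeff p e eps"
  have aZ: "a l \<in> Zp p" if "l < k" for l
  proof -
    have eZ: "eps l \<in> Zp p" using assms(6)[OF that] unfolding zp_unit_def by blast
    have "(\<lambda>n. zp_of_int p (p ^ e l) n * eps l n mod p ^ n) \<in> Zp p"
      by (rule coh_red[OF coh_mult[OF Zp_coh[OF coh_red[OF coh_const p1, unfolded zp_of_int_def[symmetric]]] Zp_coh[OF eZ]] p1])
    then show ?thesis unfolding a_def lat_coeff_def zp_mult_def .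
  qed
  define N where "N = the_enat (nu p a k) - 1"
  have xv: "vec_Zp p k x" and yv: "vec_Zp p k y" using h by auto
  have hx: "zp_ord p (diag_Q p a k x) = nu p a k" and hy: "zp_ord p (diag_Q p a k y) = nu p a k"
    using h unfolding a_def by blast+
  have bx: "\<forall>l<k. p ^ N dvd a l N * x l N * x l N"
    unfolding N_def by (rule main_bound[OF pp aZ xv hx])
  have by': "\<forall>l<k. p ^ N dvd a l N * y l N * y l N"
    unfolding N_def by (rule main_bound[OF pp aZ yv hy])
  have BZ: "diag_B p a k x y \<in> Zp p" unfolding diag_B_def
    by (rule coh_red[OF _ p1]) (intro coh_sum coh_mult, use aZ xv yv Zp_coh in \<open>auto simp: vec_Zp_def\<close>)
  have md: "p ^ N dvd a l N * x l N * y l N" if l: "l < k" for l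
  proof (rule mixed_dvd[OF pp(1)])
    show "p ^ N dvd a l N * x l N * x l N" using bx l by blast
    show "p ^ N dvd a l N * y l N * y l N" using by' l by blast
  qed
  have "p ^ N dvd (\<Sum>l<k. a l N * x l N * y l N)"
    by (rule dvd_sum) (use md in simp)
  then have "diag_B p a k x y N = 0" unfolding diag_B_def by (simp add: dvd_eq_mod_eq_0)
  then have "in_pow_ideal p N (diag_B p a k x y)" by (rule in_pow_ideal_I[OF BZ _ p1])
  then show "in_pow_ideal p (the_enat (nu p (lat_coeff p e eps) k) - 1) (diag_B p (lat_coeff p e eps) k x y)"
    unfolding N_def a_def .
qed

end
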